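(* Consider the decentralized Thompson Sampling algorithm for Bernoulli rewards described in the context, with any learning rate $\eta>0$. Let $k\in\{2,\dots,K\}$ and fix thresholds $\mu_k<x_k<y_k<\mu_1$. Then for every $T\ge1$, \[ \sum_{i=1}^N\mathbb E\left[\sum_{t=1}^T\mathbf 1\{A^{(i)}_t=k,\ E^{(i)}_k(t),\ \widetilde E^{(i)}_k(t)\}\right]\le\sum_{i=1}^N\mathbb E\left[\sum_{t=1}^T\left(\frac1{G^{(i)}_{1,t}}-1\right)\mathbf 1\{A^{(i)}_t=1\}\right]. \]
   Context: $N$ agents on a connected undirected graph; $W\in\mathbb R^{N\times N}$ doubly stochastic with nonnegative entries, $W_{ij}>0$ for $i\ne j$ iff $\{i,j\}$ is an edge. $K$ arms with Bernoulli rewards of means $\mu_1>\mu_2\ge\cdots\ge\mu_K$, independent across agents, rounds, arms. Decentralized Thompson Sampling with learning rate $\eta$ and prior $\mathrm{Beta}(1,1)$: agent $i$ maintains $\alpha^{(i)}_k(t),\beta^{(i)}_k(t)$ with $\alpha^{(i)}_k(1)=\beta^{(i)}_k(1)=1$; its posterior for arm $k$ at round $t$ is $Q^{(i)}_{k,t}=\mathrm{Beta}(\alpha^{(i)}_k(t),\beta^{(i)}_k(t))$. In round $t$, agent $i$ draws $\theta^{(i)}_k(t)\sim Q^{(i)}_{k,t}$ independently over $k$, plays $A^{(i)}_t\in\arg\max_k\theta^{(i)}_k(t)$, observes reward $Y^{(i)}_t$, sets $\tilde\alpha^{(i)}_k=\alpha^{(i)}_k(t)+\eta Y^{(i)}_t\mathbf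 1\{A^{(i)}_t=k\}$, $\tilde\beta^{(i)}_k=\beta^{(i)}_k(t)+\eta(1-Y^{(i)}_t)\mathbf 1\{A^{(i)}_t=k\}$, and then $\alpha^{(i)}_k(t+1)=\sum_j W_{ij}\tilde\alpha^{(j)}_k$, $\beta^{(i)}_k(t+1)=\sum_j W_{ij}\tilde\beta^{(j)}_k$. Notation: $\hat\mu^{(i)}_k(t)=\frac{\alpha^{(i)}_k(t)-1}{\alpha^{(i)}_k(t)+\beta^{(i)}_k(t)-2}$, $E^{(i)}_k(t)=\{\hat\mu^{(i)}_k(t)\le x_k\}$, $\widetilde E^{(i)}_k(t)=\{\theta^{(i)}_k(t)\le y_k\}$. $G^{(i)}_{1,t}=Q^{(i)}_{1,t}\big((y_k,1]\big)$, i.e. the probability that a $\mathrm{Beta}(\alpha^{(i)}_1(t),\beta^{(i)}_1(t))$ random variable exceeds $y_k$. *)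

theory Defs
  imports "HOL-Probability.Probability"
begin

text \<open>State of all agents: (alpha, beta), indexed by agent i and arm k.\<close>
type_synonym dts_state = "(nat \<Rightarrow> nat \<Rightarrow> real) \<times> (nat \<Rightarrow> nat \<Rightarrow> real)"

definition beta_density :: "real \<Rightarrow> real \<Rightarrow> real \<Rightarrow> real" where
  "beta_density a b u =
     (if 0 < u \<and> u < 1 then u powr (a - 1) * (1 - u) powr (b - 1) / (Beta a b :: real) else 0)"

definition beta_measure :: "real \<Rightarrow> real \<Rightarrow> real measure" where
  "beta_measure a b = density lborel (\<lambda>u. ennreal (beta_density a b u))"

definition sample_theta :: "nat \<Rightarrow> nat \<Rightarrow> dts_state \<Rightarrow> (nat \<times> nat \<Rightarrow> real) measure" where
  "sample_theta N K s =
     PiM ({1..N} \<times> {1..K}) (\<lambda>(i, a). beta_measure (fst s i a) (snd s i a))"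

text \<open>Arm played by agent i: an argmax of the samples (ties, a null event, broken
  towards the smallest index).\<close>
definition chosen_arm :: "nat \<Rightarrow> (nat \<times> nat \<Rightarrow> real) \<Rightarrow> nat \<Rightarrow> nat" where
  "chosen_arm K \<theta> i = (LEAST a. a \<in> {1..K} \<and> (\<forall>b\<in>{1..K}. \<theta> (i, b) \<le> \<theta> (i, a)))"

definition sample_rewards :: "nat \<Rightarrow> (nat \<Rightarrow> real) \<Rightarrow> (nat \<Rightarrow> nat) \<Rightarrow> (nat \<Rightarrow> bool) measure" where
  "sample_rewards N \<mu> A = PiM {1..N} (\<lambda>i. measure_pmf (bernoulli_pmf (\<mu> (A i))))"

definition dts_update ::
  "nat \<Rightarrow> (nat \<Rightarrow> nat \<Rightarrow> real) \<Rightarrow> real \<Rightarrow> dts_state \<Rightarrow> (nat \<Rightarrow> nat) \<Rightarrow> (nat \<Rightarrow> bool) \<Rightarrow> dts_state" where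
  "dts_update N W \<eta> s A Y =
     ((\<lambda>i a. \<Sum>j\<in>{1..N}. W i j * (fst s j a + \<eta> * (if A j = a \<and> Y j then 1 else 0))),
      (\<lambda>i a. \<Sum>j\<in>{1..N}. W i j * (snd s j a + \<eta> * (if A j = a \<and> \<not> Y j then 1 else 0))))"

text \<open>dts_cum N K W mu eta g T s = E[ sum_{t=1}^T g(S_t, theta(t), A_t) ] for the
  Markov chain of the algorithm started in state S_1 = s (expectation of an additive
  functional, defined by backward recursion / tower property; nonnegative integrals).\<close>
fun dts_cum ::
  "nat \<Rightarrow> nat \<Rightarrow> (nat \<Rightarrow> nat \<Rightarrow> real) \<Rightarrow> (nat \<Rightarrow> real) \<Rightarrow> real \<Rightarrow>
   (dts_state \<Rightarrow> (nat \<times> nat \<Rightarrow> real) \<Rightarrow> (nat \<Rightarrow> nat) \<Rightarrow> ennreal) \<Rightarrow> nat \<Rightarrow> dts_state \<Rightarrow> ennreal" where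
  "dts_cum N K W \<mu> \<eta> g 0 s = 0"
| "dts_cum N K W \<mu> \<eta> g (Suc T) s =
     (\<integral>\<^sup>+ \<theta>. (\<integral>\<^sup>+ Y. (g s \<theta> (chosen_arm K \<theta>)
          + dts_cum N K W \<mu> \<eta> g T (dts_update N W \<eta> s (chosen_arm K \<theta>) Y))
        \<partial>sample_rewards N \<mu> (chosen_arm K \<theta>)) \<partial>sample_theta N K s)"

definition dts_init :: dts_state where
  "dts_init = ((\<lambda>i a. 1), (\<lambda>i a. 1))"

definition mu_hat :: "dts_state \<Rightarrow> nat \<Rightarrow> nat \<Rightarrow> real" where
  "mu_hat s i a = (fst s i a - 1) / (fst s i a + snd s i a - 2)"

definition G1 :: "dts_state \<Rightarrow> nat \<Rightarrow> real \<Rightarrow> real" where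
  "G1 s i y = measure (beta_measure (fst s i 1) (snd s i 1)) {y<..1}"

definition lhs_term :: "nat \<Rightarrow> nat \<Rightarrow> real \<Rightarrow> real \<Rightarrow>
    dts_state \<Rightarrow> (nat \<times> nat \<Rightarrow> real) \<Rightarrow> (nat \<Rightarrow> nat) \<Rightarrow> ennreal" where
  "lhs_term i k x y s \<theta> A =
     (if A i = k \<and> mu_hat s i k \<le> x \<and> \<theta> (i, k) \<le> y then 1 else 0)"

definition rhs_term :: "nat \<Rightarrow> real \<Rightarrow>
    dts_state \<Rightarrow> (nat \<times> nat \<Rightarrow> real) \<Rightarrow> (nat \<Rightarrow> nat) \<Rightarrow> ennreal" where
  "rhs_term i y s \<theta> A = (if A i = 1 then ennreal (1 / G1 s i y - 1) else 0)"

end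

theory Submission
  imports Defs
begin


lemma Beta_pos_real: "0 < a \<Longrightarrow> 0 < b \<Longrightarrow> (0::real) < Beta a b"
  by (simp add: Beta_def Gamma_real_pos)

lemma beta_density_nonneg: "0 < a \<Longrightarrow> 0 < b \<Longrightarrow> 0 \<le> beta_density a b u"
  unfolding beta_density_def using Beta_pos_real[of a b] by auto

lemma beta_density_meas[measurable]: "beta_density a b \<in> borel_measurable borel"
  unfolding beta_density_def by measurable

lemma space_beta[simp]: "space (beta_measure a b) = UNIV"
  by (simp add: beta_measure_def)

lemma sets_beta[simp, measurable_cong]: "sets (beta_measure a b) = sets borel"
  by (simp add: beta_measure_def)

lemma prob_beta: assumes "0 < a" "0 < b" shows "prob_space (beta_measure a b)"
proof
  have "((\<lambda>t. t powr (a - 1) * (1 - t) powr (b - 1)) has_integral Beta a b) {0<..<1}"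
    using has_integral_Beta_real[OF assms] by (simp add: has_integral_Icc_iff_Ioo)
  then have "((\<lambda>t. t powr (a - 1) * (1 - t) powr (b - 1) / Beta a b) has_integral (Beta a b / Beta a b)) {0<..<1}"
    by (rule has_integral_divide)
  then have I: "((\<lambda>t. t powr (a - 1) * (1 - t) powr (b - 1) / Beta a b) has_integral 1) {0<..<1}"
    using Beta_pos_real[OF assms] by simp
  have "(\<integral>\<^sup>+x. ennreal (indicator {0<..<1} x * (x powr (a - 1) * (1 - x) powr (b - 1) / Beta a b)) \<partial>lborel) = ennreal 1"
    by (rule nn_integral_has_integral_lebesgue[OF _ I]) (use Beta_pos_real[OF assms] in simp)
  moreover have "\<And>x. beta_density a b x = indicator {0<..<1} x * (x powr (a - 1) * (1 - x) powr (b - 1) / Beta a b)"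
    by (simp add: beta_density_def indicator_def)
  ultimately show "emeasure (beta_measure a b) (space (beta_measure a b)) = 1"
    by (simp add: beta_measure_def emeasure_density)
qed

lemma beta_pos: assumes "0 < a" "0 < b" "y < 1"
  shows "0 < measure (beta_measure a b) {y<..1}"
proof -
  interpret prob_space "beta_measure a b" by (rule prob_beta[OF assms(1,2)])
  have e: "emeasure (beta_measure a b) {y<..1} = (\<integral>\<^sup>+x. indicator {y<..1} x * ennreal (beta_density a b x) \<partial>lborel)"
    by (simp add: beta_measure_def emeasure_density nn_integral_density mult.commute)
  have "emeasure (beta_measure a b) {y<..1} \<noteq> 0"
  proof
    assume "emeasure (beta_measure a b) {y<..1} = 0"
    then have "AE x in lborel. indicator {y<..1} x * ennreal (beta_density a b x) = 0"
      using e by (subst nn_integral_0_iff_AE[symmetric]) auto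
    moreover have "indicator {y<..1} x * ennreal (beta_density a b x) \<noteq> 0" if "x \<in> {max y 0<..<1}" for x
      using that Beta_pos_real[OF assms(1,2)] by (auto simp: beta_density_def indicator_def)
    ultimately have "AE x in lborel. x \<notin> {max y 0<..<1}"
      by (auto elim!: AE_mp)
    then have "emeasure lborel {max y 0<..<1} = 0"
      by (subst (asm) AE_iff_measurable[where N="{max y 0<..<1}"]) auto
    then show False using assms by simp
  qed
  then show ?thesis using emeasure_eq_measure by (simp add: zero_less_measure_iff)
qed



lemma argmax_ex: "1 \<le> K \<Longrightarrow> \<exists>a. a \<in> {1..K} \<and> (\<forall>b\<in>{1..K}. (f::nat\<Rightarrow>real) b \<le> f a)"
proof -
  assume K: "1 \<le> K"
  have "Max (f ` {1..K}) \<in> f ` {1..K}" using K by (intro Max_in) auto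
  then obtain a where "a \<in> {1..K}" "f a = Max (f ` {1..K})" by auto
  then show ?thesis by (intro exI[of _ a]) auto
qed

lemma chosen_arm_prop:
  assumes "1 \<le> K"
  shows "chosen_arm K \<theta> i \<in> {1..K} \<and> (\<forall>b\<in>{1..K}. \<theta> (i, b) \<le> \<theta> (i, chosen_arm K \<theta> i))"
  unfolding chosen_arm_def
  using argmax_ex[OF assms, of "\<lambda>b. \<theta> (i, b)"] by (rule LeastI_ex)

lemma chosen_arm_char:
  assumes "1 \<le> K" "a \<in> {1..K}"
  shows "chosen_arm K \<theta> i = a \<longleftrightarrow>
    (\<forall>b\<in>{1..K}. \<theta> (i, b) \<le> \<theta> (i, a)) \<and> (\<forall>b\<in>{1..K}. b < a \<longrightarrow> \<theta> (i, b) < \<theta> (i, a))"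
proof
  assume c: "chosen_arm K \<theta> i = a"
  have P: "\<forall>b\<in>{1..K}. \<theta> (i, b) \<le> \<theta> (i, a)" using chosen_arm_prop[OF assms(1), of \<theta> i] c by auto
  moreover have "\<theta> (i, b) < \<theta> (i, a)" if bK: "b \<in> {1..K}" and ba: "b < a" for b
  proof -
    have "\<not> (b \<in> {1..K} \<and> (\<forall>c\<in>{1..K}. \<theta> (i, c) \<le> \<theta> (i, b)))"
      using not_less_Least[of b "\<lambda>a. a \<in> {1..K} \<and> (\<forall>b\<in>{1..K}. \<theta> (i, b) \<le> \<theta> (i, a))"] c ba
      unfolding chosen_arm_def by auto
    then obtain c where "c \<in> {1..K}" "\<theta> (i, b) < \<theta> (i, c)" using bK by (auto simp: not_le)
    then show ?thesis using P by force
  qed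
  ultimately show "(\<forall>b\<in>{1..K}. \<theta> (i, b) \<le> \<theta> (i, a)) \<and> (\<forall>b\<in>{1..K}. b < a \<longrightarrow> \<theta> (i, b) < \<theta> (i, a))"
    by auto
next
  assume h: "(\<forall>b\<in>{1..K}. \<theta> (i, b) \<le> \<theta> (i, a)) \<and> (\<forall>b\<in>{1..K}. b < a \<longrightarrow> \<theta> (i, b) < \<theta> (i, a))"
  show "chosen_arm K \<theta> i = a" unfolding chosen_arm_def
  proof (rule Least_equality)
    show "a \<in> {1..K} \<and> (\<forall>b\<in>{1..K}. \<theta> (i, b) \<le> \<theta> (i, a))" using h assms by auto
    fix c assume "c \<in> {1..K} \<and> (\<forall>b\<in>{1..K}. \<theta> (i, b) \<le> \<theta> (i, c))"
    then show "a \<le> c" using h assms(2) by (meson leI not_le)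
  qed
qed

lemma chosen_arm_1:
  assumes "1 \<le> K" "\<forall>b\<in>{1..K}. \<theta> (i, b) \<le> \<theta> (i, 1)"
  shows "chosen_arm K \<theta> i = 1"
  using assms by (subst chosen_arm_char) auto

lemma space_rewards: "space (sample_rewards N \<mu> A) = PiE {1..N} (\<lambda>_. UNIV)"
  by (simp add: sample_rewards_def space_PiM)

lemma prob_rewards: "prob_space (sample_rewards N \<mu> A)"
  unfolding sample_rewards_def by (intro prob_space_PiM prob_space_measure_pmf)

lemma rewards_meas[measurable]: "(f :: (nat \<Rightarrow> bool) \<Rightarrow> ennreal) \<in> borel_measurable (sample_rewards N \<mu> A)"
proof (rule measurableI)
  fix B :: "ennreal set"
  let ?R = "sample_rewards N \<mu> A"
  let ?S = "f -` B \<inter> space ?R"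
  have fin: "finite (space ?R)" unfolding space_rewards by (intro finite_PiE) auto
  have sing: "{Y} \<in> sets ?R" if "Y \<in> space ?R" for Y
  proof -
    have "{Y} = PiE {1..N} (\<lambda>j. {Y j})"
      using that unfolding space_rewards by (subst PiE_singleton) (auto simp: PiE_iff)
    also have "\<dots> \<in> sets ?R" unfolding sample_rewards_def
      by (intro sets_PiM_I_finite) auto
    finally show ?thesis .
  qed
  have "?S = (\<Union>Y\<in>?S. {Y})" by auto
  also have "\<dots> \<in> sets ?R"
    using fin sing by (intro sets.finite_UN) (auto intro: finite_subset)
  finally show "?S \<in> sets ?R" .
qed auto



lemma space_theta: "space (sample_theta N K s) = PiE ({1..N}\<times>{1..K}) (\<lambda>_. UNIV)"
  by (simp add: sample_theta_def space_PiM split_beta)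

lemma theta_coord_meas[measurable]:
  assumes "i \<in> {1..N}" "b \<in> {1..K}"
  shows "(\<lambda>\<theta>. \<theta> (i, b)) \<in> borel_measurable (sample_theta N K s)"
proof -
  have "(\<lambda>\<theta>. \<theta> (i, b)) \<in> measurable (sample_theta N K s) (beta_measure (fst s i b) (snd s i b))"
    unfolding sample_theta_def using measurable_component_singleton[of "(i,b)" "{1..N}\<times>{1..K}" "\<lambda>(i, a). beta_measure (fst s i a) (snd s i a)"] assms
    by simp
  then show ?thesis by (simp only: measurable_cong_sets[OF refl sets_beta])
qed

lemma pred_le: assumes [measurable]: "f \<in> borel_measurable M" "g \<in> borel_measurable M" shows "Measurable.pred M (\<lambda>x. (f x::real) \<le> g x)"
  unfolding pred_def by (rule borel_measurable_le[OF assms])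
lemma pred_less: assumes [measurable]: "f \<in> borel_measurable M" "g \<in> borel_measurable M" shows "Measurable.pred M (\<lambda>x. (f x::real) < g x)"
  unfolding pred_def by (rule borel_measurable_less[OF assms])

lemma chosen_meas[measurable]:
  assumes K: "1 \<le> K" and i: "i \<in> {1..N}"
  shows "(\<lambda>\<theta>. chosen_arm K \<theta> i) \<in> measurable (sample_theta N K s) (count_space UNIV)"
proof (subst measurable_count_space_eq2_countable, safe)
  fix a :: nat
  let ?M = "sample_theta N K s"
  show "(\<lambda>\<theta>. chosen_arm K \<theta> i) -` {a} \<inter> space ?M \<in> sets ?M"
  proof (cases "a \<in> {1..K}")
    case True
    have "(\<lambda>\<theta>. chosen_arm K \<theta> i) -` {a} \<inter> space ?M =
      {\<theta> \<in> space ?M. (\<forall>b\<in>{1..K}. \<theta> (i, b) \<le> \<theta> (i, a)) \<and> (\<forall>b\<in>{1..K}. b < a \<longrightarrow> \<theta> (i, b) < \<theta> (i, a))}"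
      using chosen_arm_char[OF K True, of _ i] by blast
    also have "\<dots> \<in> sets ?M"
      apply (intro predE pred_intros_logic(3) pred_intros_countable_bounded(3) pred_intros_imp' pred_le pred_less theta_coord_meas)
      using True i by auto
    finally show ?thesis .
  next
    case False
    then have "(\<lambda>\<theta>. chosen_arm K \<theta> i) -` {a} \<inter> space ?M = {}"
      using chosen_arm_prop[OF K] by auto
    then show ?thesis by simp
  qed
qed auto



lemma comp_meas:
  fixes c :: "(nat \<Rightarrow> nat) \<Rightarrow> ennreal"
  assumes K: "1 \<le> K" and c: "\<And>A A'. (\<forall>j\<in>{1..N}. A j = A' j) \<Longrightarrow> c A = c A'"
  shows "(\<lambda>\<theta>. c (chosen_arm K \<theta>)) \<in> borel_measurable (sample_theta N K s)"
proof -
  let ?M = "sample_theta N K s"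
  let ?F = "PiE {1..N} (\<lambda>_. {1..K})"
  let ?R = "\<lambda>\<theta>. restrict (chosen_arm K \<theta>) {1..N}"
  have fin: "finite ?F" by (intro finite_PiE) auto
  have R: "?R \<in> measurable ?M (count_space ?F)"
  proof (subst measurable_count_space_eq2[OF fin], intro conjI ballI)
    show "?R \<in> space ?M \<rightarrow> ?F" using chosen_arm_prop[OF K] by auto
  next
    fix f assume f: "f \<in> ?F"
    have "?R -` {f} \<inter> space ?M = {\<theta> \<in> space ?M. \<forall>j\<in>{1..N}. chosen_arm K \<theta> j = f j}"
      using f by (auto simp: fun_eq_iff PiE_iff extensional_def restrict_def)
    also have "\<dots> \<in> sets ?M"
      apply (intro predE pred_intros_countable_bounded(3) pred_count_space_const1 chosen_meas K)
      by auto
    finally show "?R -` {f} \<inter> space ?M \<in> sets ?M" .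
  qed
  have "(\<lambda>\<theta>. c (?R \<theta>)) \<in> borel_measurable ?M"
    by (rule measurable_compose[OF R]) simp
  moreover have "c (?R \<theta>) = c (chosen_arm K \<theta>)" for \<theta>
    by (rule c) simp
  ultimately show ?thesis by simp
qed



lemma update_cong:
  assumes "\<forall>j\<in>{1..N}. A j = A' j"
  shows "dts_update N W \<eta> s A = dts_update N W \<eta> s A'"
  using assms unfolding dts_update_def by (auto intro!: sum.cong ext)

lemma rewards_cong:
  assumes "\<forall>j\<in>{1..N}. A j = A' j"
  shows "sample_rewards N \<mu> A = sample_rewards N \<mu> A'"
  using assms unfolding sample_rewards_def by (auto intro!: PiM_cong)

lemma split_step:
  fixes g :: "(nat \<times> nat \<Rightarrow> real) \<Rightarrow> ennreal" and h :: "dts_state \<Rightarrow> ennreal"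
  assumes K: "1 \<le> K" and g: "g \<in> borel_measurable (sample_theta N K s)"
  shows "(\<integral>\<^sup>+\<theta>. (\<integral>\<^sup>+Y. (g \<theta> + h (dts_update N W \<eta> s (chosen_arm K \<theta>) Y)) \<partial>sample_rewards N \<mu> (chosen_arm K \<theta>)) \<partial>sample_theta N K s)
       = (\<integral>\<^sup>+\<theta>. g \<theta> \<partial>sample_theta N K s) + (\<integral>\<^sup>+\<theta>. (\<integral>\<^sup>+Y. h (dts_update N W \<eta> s (chosen_arm K \<theta>) Y) \<partial>sample_rewards N \<mu> (chosen_arm K \<theta>)) \<partial>sample_theta N K s)"
proof -
  have inner: "(\<integral>\<^sup>+Y. (g \<theta> + h (dts_update N W \<eta> s A Y)) \<partial>sample_rewards N \<mu> A)
     = g \<theta> + (\<integral>\<^sup>+Y. h (dts_update N W \<eta> s A Y) \<partial>sample_rewards N \<mu> A)" for \<theta> A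
  proof -
    interpret prob_space "sample_rewards N \<mu> A" by (rule prob_rewards)
    show ?thesis by (subst nn_integral_add) (auto simp: emeasure_space_1)
  qed
  show ?thesis
    unfolding inner
  proof (rule nn_integral_add[OF g])
    show "(\<lambda>\<theta>. \<integral>\<^sup>+ Y. h (dts_update N W \<eta> s (chosen_arm K \<theta>) Y) \<partial>sample_rewards N \<mu> (chosen_arm K \<theta>))
       \<in> borel_measurable (sample_theta N K s)"
      by (rule comp_meas[OF K, where c="\<lambda>A. \<integral>\<^sup>+ Y. h (dts_update N W \<eta> s A Y) \<partial>sample_rewards N \<mu> A"])
        (metis update_cong rewards_cong)
  qed
qed

definition good :: "nat \<Rightarrow> dts_state \<Rightarrow> bool" where
  "good N s \<longleftrightarrow> (\<forall>i\<in>{1..N}. \<forall>a. 1 \<le> fst s i a \<and> 1 \<le> snd s i a)"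

lemma good_update:
  assumes g: "good N s" and Wn: "\<And>i j. i \<in> {1..N} \<Longrightarrow> j \<in> {1..N} \<Longrightarrow> W i j \<ge> 0"
    and Wr: "\<And>i. i \<in> {1..N} \<Longrightarrow> (\<Sum>j\<in>{1..N}. W i j) = 1" and eta: "\<eta> > 0"
  shows "good N (dts_update N W \<eta> s A Y)"
  unfolding good_def
proof (intro ballI allI conjI)
  fix i a assume i: "i \<in> {1..N}"
  have "1 = (\<Sum>j\<in>{1..N}. W i j * 1)" using Wr[OF i] by simp
  also have "\<dots> \<le> (\<Sum>j\<in>{1..N}. W i j * (fst s j a + \<eta> * (if A j = a \<and> Y j then 1 else 0)))"
    using g eta Wn[OF i] by (intro sum_mono mult_left_mono) (auto simp: good_def add_increasing2)
  finally show "1 \<le> fst (dts_update N W \<eta> s A Y) i a" by (simp add: dts_update_def)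
  have "1 = (\<Sum>j\<in>{1..N}. W i j * 1)" using Wr[OF i] by simp
  also have "\<dots> \<le> (\<Sum>j\<in>{1..N}. W i j * (snd s j a + \<eta> * (if A j = a \<and> \<not> Y j then 1 else 0)))"
    using g eta Wn[OF i] by (intro sum_mono mult_left_mono) (auto simp: good_def add_increasing2)
  finally show "1 \<le> snd (dts_update N W \<eta> s A Y) i a" by (simp add: dts_update_def)
qed

lemma lhs_meas:
  assumes K: "1 \<le> K" "k \<in> {1..K}" and i: "i \<in> {1..N}"
  shows "(\<lambda>\<theta>. lhs_term i k x y s \<theta> (chosen_arm K \<theta>)) \<in> borel_measurable (sample_theta N K s)"
  unfolding lhs_term_def
  by (intro measurable_If borel_measurable_const predE pred_intros_logic(3) pred_intros_conj2'
     pred_count_space_const1 chosen_meas K i pred_le theta_coord_meas assms)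

lemma rhs_meas:
  assumes K: "1 \<le> K" and i: "i \<in> {1..N}"
  shows "(\<lambda>\<theta>. rhs_term i y s \<theta> (chosen_arm K \<theta>)) \<in> borel_measurable (sample_theta N K s)"
  unfolding rhs_term_def
  by (intro measurable_If borel_measurable_const predE pred_count_space_const1 chosen_meas K i)



lemma per_round:
  assumes gs: "good N s" and i: "i \<in> {1..N}" and k: "k \<in> {2..K}" and y1: "y < 1"
  shows "(\<integral>\<^sup>+\<theta>. lhs_term i k x y s \<theta> (chosen_arm K \<theta>) \<partial>sample_theta N K s)
       \<le> (\<integral>\<^sup>+\<theta>. rhs_term i y s \<theta> (chosen_arm K \<theta>) \<partial>sample_theta N K s)"
proof -
  have K1: "1 \<le> K" using k by auto
  define I where "I = {1..N} \<times> {1..K}"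
  define M' where "M' = (\<lambda>z. beta_measure (max 1 (fst s (fst z) (snd z))) (max 1 (snd s (fst z) (snd z))))"
  have finI: "finite I" unfolding I_def by auto
  have i1: "(i, 1) \<in> I" using i K1 unfolding I_def by auto
  have probM: "prob_space (M' z)" for z unfolding M'_def by (rule prob_beta) auto
  interpret product_sigma_finite M'
    by (intro product_sigma_finite.intro prob_space_imp_sigma_finite probM)
  have Th: "sample_theta N K s = PiM I M'"
    unfolding sample_theta_def I_def M'_def
    using gs unfolding good_def by (intro PiM_cong) (auto simp: max_def)
  have setsM: "sets (M' z) = sets borel" for z unfolding M'_def by simp
  have spaceTh: "space (sample_theta N K s) = PiE I (\<lambda>_. UNIV)"
    unfolding I_def by (rule space_theta)
  define P where "P = beta_measure (fst s i 1) (snd s i 1)"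
  have P: "M' (i, 1) = P" using gs i unfolding M'_def P_def good_def by (auto simp: max_def)
  have P': "M' (i, Suc 0) = P" using P by simp
  interpret P: prob_space P using probM[of "(i,1)"] P by simp
  define p where "p = measure P {y<..}"
  define G where "G = G1 s i y"
  have G_def': "G = measure P {y<..1}" unfolding G_def G1_def P_def by simp
  have a1: "1 \<le> fst s i 1" "1 \<le> snd s i 1" using gs i unfolding good_def by auto
  have Gpos: "0 < G" unfolding G_def' P_def
    using a1 y1 by (intro beta_pos) auto
  have ev: "{y<..} \<in> sets P" by (simp add: P_def)
  have Gp: "G \<le> p" unfolding G_def' p_def by (intro P.finite_measure_mono ev) auto
  have p1: "p \<le> 1" unfolding p_def by (rule P.prob_le_1)
  have p0: "0 \<le> p" unfolding p_def by (rule measure_nonneg)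
  have Pcompl: "emeasure P {..y} = ennreal (1 - p)"
  proof -
    have eq: "{..y} = space P - {y<..}" by (auto simp: P_def)
    have "emeasure P {..y} = ennreal (measure P {..y})" by (rule P.emeasure_eq_measure)
    also have "measure P {..y} = 1 - p" unfolding eq p_def by (rule P.prob_compl[OF ev])
    finally show ?thesis .
  qed
  have Pp: "emeasure P {y<..} = ennreal p" unfolding p_def by (rule P.emeasure_eq_measure)
  define E1 where "E1 = (\<lambda>z::nat\<times>nat. if fst z = i then {..y} else (UNIV::real set))"
  define E2 where "E2 = (\<lambda>z::nat\<times>nat. if z = (i,1) then {y<..} else if fst z = i then {..y} else (UNIV::real set))"
  have E1s: "E1 z \<in> sets (M' z)" for z unfolding E1_def setsM by auto
  have E2s: "E2 z \<in> sets (M' z)" for z unfolding E2_def setsM by auto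
  define Q where "Q = (\<Prod>z\<in>I - {(i,1)}. emeasure (M' z) (E1 z))"
  have Q2: "Q = (\<Prod>z\<in>I - {(i,1)}. emeasure (M' z) (E2 z))"
    unfolding Q_def E1_def E2_def by (intro prod.cong) auto
  have B1: "emeasure (PiM I M') (PiE I E1) = ennreal (1 - p) * Q"
    using emeasure_PiM[OF finI E1s] prod.remove[OF finI i1, of "\<lambda>z. emeasure (M' z) (E1 z)"]
    unfolding Q_def by (simp add: E1_def P P' Pcompl)
  have B2: "emeasure (PiM I M') (PiE I E2) = ennreal p * Q"
    using emeasure_PiM[OF finI E2s] prod.remove[OF finI i1, of "\<lambda>z. emeasure (M' z) (E2 z)"]
    unfolding Q2 by (simp add: E2_def P P' Pp)
  have B1s: "PiE I E1 \<in> sets (PiM I M')" using finI E1s by (intro sets_PiM_I_finite) auto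
  have B2s: "PiE I E2 \<in> sets (PiM I M')" using finI E2s by (intro sets_PiM_I_finite) auto

  have "(\<integral>\<^sup>+\<theta>. lhs_term i k x y s \<theta> (chosen_arm K \<theta>) \<partial>sample_theta N K s)
      \<le> (\<integral>\<^sup>+\<theta>. indicator (PiE I E1) \<theta> \<partial>sample_theta N K s)"
  proof (rule nn_integral_mono)
    fix \<theta> assume th: "\<theta> \<in> space (sample_theta N K s)"
    show "lhs_term i k x y s \<theta> (chosen_arm K \<theta>) \<le> indicator (PiE I E1) \<theta>"
    proof (cases "chosen_arm K \<theta> i = k \<and> \<theta> (i, k) \<le> y")
      case True
      have "\<theta> \<in> PiE I E1"
        using th True chosen_arm_prop[OF K1, of \<theta> i] unfolding spaceTh
        by (auto simp: PiE_iff E1_def I_def intro: order.trans)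
      then show ?thesis by (simp add: lhs_term_def)
    next
      case False
      then show ?thesis by (auto simp: lhs_term_def)
    qed
  qed
  also have "\<dots> = ennreal (1 - p) * Q" using B1 B1s by (simp add: Th)
  also have "\<dots> \<le> ennreal (1 / G - 1) * (ennreal p * Q)"
  proof -
    have "1 \<le> p / G" using Gpos Gp by (simp add: le_divide_eq)
    moreover have "(1 / G - 1) * p = p / G - p" by (simp add: left_diff_distrib)
    ultimately have le: "1 - p \<le> (1 / G - 1) * p" by linarith
    have "1 \<le> 1 / G" using Gpos Gp p1 by (simp add: le_divide_eq)
    then have nn: "0 \<le> 1 / G - 1" by linarith
    have "ennreal (1 / G - 1) * (ennreal p * Q) = ennreal ((1 / G - 1) * p) * Q"
      using nn p0 by (simp add: ennreal_mult mult.assoc)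
    moreover have "ennreal (1 - p) * Q \<le> ennreal ((1 / G - 1) * p) * Q"
      by (intro mult_right_mono ennreal_leI le) simp
    ultimately show ?thesis by simp
  qed
  also have "\<dots> = (\<integral>\<^sup>+\<theta>. ennreal (1 / G - 1) * indicator (PiE I E2) \<theta> \<partial>sample_theta N K s)"
    using B2 B2s by (simp add: Th nn_integral_cmult_indicator)
  also have "\<dots> \<le> (\<integral>\<^sup>+\<theta>. rhs_term i y s \<theta> (chosen_arm K \<theta>) \<partial>sample_theta N K s)"
  proof (rule nn_integral_mono)
    fix \<theta> assume th: "\<theta> \<in> space (sample_theta N K s)"
    show "ennreal (1 / G - 1) * indicator (PiE I E2) \<theta> \<le> rhs_term i y s \<theta> (chosen_arm K \<theta>)"
    proof (cases "\<theta> \<in> PiE I E2")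
      case True
      have "\<forall>b\<in>{1..K}. \<theta> (i, b) \<le> \<theta> (i, 1)"
      proof
        fix b assume b: "b \<in> {1..K}"
        have t1: "y < \<theta> (i, 1)" using True i1 by (auto simp: PiE_iff E2_def)
        show "\<theta> (i, b) \<le> \<theta> (i, 1)"
        proof (cases "b = 1")
          case False
          have "(i, b) \<in> I" using b i unfolding I_def by auto
          then have "\<theta> (i, b) \<in> E2 (i, b)" using True by (auto simp: PiE_iff)
          then have "\<theta> (i, b) \<le> y" using False by (simp add: E2_def)
          then show ?thesis using t1 by simp
        qed simp
      qed
      then have "chosen_arm K \<theta> i = 1" by (rule chosen_arm_1[OF K1])
      then show ?thesis using True by (simp add: rhs_term_def G_def)
    qed simp
  qed
  finally show ?thesis .
qed



lemma main_i:
  assumes k: "k \<in> {2..K}" and i: "i \<in> {1..N}" and y1: "y < 1"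
    and Wn: "\<And>i j. i \<in> {1..N} \<Longrightarrow> j \<in> {1..N} \<Longrightarrow> W i j \<ge> 0"
    and Wr: "\<And>i. i \<in> {1..N} \<Longrightarrow> (\<Sum>j\<in>{1..N}. W i j) = 1" and eta: "\<eta> > 0"
  shows "good N s \<Longrightarrow> dts_cum N K W \<mu> \<eta> (lhs_term i k x y) T s \<le> dts_cum N K W \<mu> \<eta> (rhs_term i y) T s"
proof (induction T arbitrary: s)
  case 0
  then show ?case by simp
next
  case (Suc T)
  have K1: "1 \<le> K" and k1: "k \<in> {1..K}" using k by auto
  let ?Th = "sample_theta N K s"
  let ?R = "\<lambda>\<theta>. sample_rewards N \<mu> (chosen_arm K \<theta>)"
  let ?U = "\<lambda>\<theta> Y. dts_update N W \<eta> s (chosen_arm K \<theta>) Y"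
  let ?c1 = "dts_cum N K W \<mu> \<eta> (lhs_term i k x y) T"
  let ?c2 = "dts_cum N K W \<mu> \<eta> (rhs_term i y) T"
  have "dts_cum N K W \<mu> \<eta> (lhs_term i k x y) (Suc T) s
      = (\<integral>\<^sup>+\<theta>. (\<integral>\<^sup>+Y. (lhs_term i k x y s \<theta> (chosen_arm K \<theta>) + ?c1 (?U \<theta> Y)) \<partial>?R \<theta>) \<partial>?Th)"
    by simp
  also have "\<dots> \<le> (\<integral>\<^sup>+\<theta>. (\<integral>\<^sup>+Y. (lhs_term i k x y s \<theta> (chosen_arm K \<theta>) + ?c2 (?U \<theta> Y)) \<partial>?R \<theta>) \<partial>?Th)"
    by (intro nn_integral_mono add_left_mono Suc.IH good_update[OF Suc.prems Wn Wr eta])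
  also have "\<dots> = (\<integral>\<^sup>+\<theta>. lhs_term i k x y s \<theta> (chosen_arm K \<theta>) \<partial>?Th) + (\<integral>\<^sup>+\<theta>. (\<integral>\<^sup>+Y. ?c2 (?U \<theta> Y) \<partial>?R \<theta>) \<partial>?Th)"
    by (rule split_step[OF K1 lhs_meas[OF K1 k1 i]])
  also have "\<dots> \<le> (\<integral>\<^sup>+\<theta>. rhs_term i y s \<theta> (chosen_arm K \<theta>) \<partial>?Th) + (\<integral>\<^sup>+\<theta>. (\<integral>\<^sup>+Y. ?c2 (?U \<theta> Y) \<partial>?R \<theta>) \<partial>?Th)"
    by (intro add_right_mono per_round[OF Suc.prems i k y1])
  also have "\<dots> = (\<integral>\<^sup>+\<theta>. (\<integral>\<^sup>+Y. (rhs_term i y s \<theta> (chosen_arm K \<theta>) + ?c2 (?U \<theta> Y)) \<partial>?R \<theta>) \<partial>?Th)"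
    by (rule split_step[OF K1 rhs_meas[OF K1 i], symmetric])
  also have "\<dots> = dts_cum N K W \<mu> \<eta> (rhs_term i y) (Suc T) s"
    by simp
  finally show ?case .
qed

theorem lemma5:
  fixes N K k T :: nat
    and W :: "nat \<Rightarrow> nat \<Rightarrow> real"
    and E :: "nat \<Rightarrow> nat \<Rightarrow> bool"
    and \<mu> :: "nat \<Rightarrow> real"
    and \<eta> x y :: real
  assumes N_pos: "N \<ge> 1"
    and E_vertices: "\<And>i j. E i j \<Longrightarrow> i \<in> {1..N} \<and> j \<in> {1..N}"
    and E_sym: "\<And>i j. E i j \<Longrightarrow> E j i"
    and E_irrefl: "\<And>i. \<not> E i i"
    and E_connected: "\<And>i j. i \<in> {1..N} \<Longrightarrow> j \<in> {1..N} \<Longrightarrow> E\<^sup>*\<^sup>* i j"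
    and W_nonneg: "\<And>i j. i \<in> {1..N} \<Longrightarrow> j \<in> {1..N} \<Longrightarrow> W i j \<ge> 0"
    and W_rows: "\<And>i. i \<in> {1..N} \<Longrightarrow> (\<Sum>j\<in>{1..N}. W i j) = 1"
    and W_cols: "\<And>j. j \<in> {1..N} \<Longrightarrow> (\<Sum>i\<in>{1..N}. W i j) = 1"
    and W_graph: "\<And>i j. i \<in> {1..N} \<Longrightarrow> j \<in> {1..N} \<Longrightarrow> i \<noteq> j \<Longrightarrow> (W i j > 0 \<longleftrightarrow> E i j)"
    and \<mu>_range: "\<And>a. a \<in> {1..K} \<Longrightarrow> 0 \<le> \<mu> a \<and> \<mu> a \<le> 1"
    and \<mu>_best: "\<And>a. a \<in> {2..K} \<Longrightarrow> \<mu> a < \<mu> 1"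
    and \<mu>_sorted: "\<And>a. a \<in> {2..<K} \<Longrightarrow> \<mu> (Suc a) \<le> \<mu> a"
    and \<eta>_pos: "\<eta> > 0"
    and k_range: "k \<in> {2..K}"
    and thresholds: "\<mu> k < x" "x < y" "y < \<mu> 1"
    and T_pos: "T \<ge> 1"
  shows "(\<Sum>i\<in>{1..N}. dts_cum N K W \<mu> \<eta> (lhs_term i k x y) T dts_init)
         \<le> (\<Sum>i\<in>{1..N}. dts_cum N K W \<mu> \<eta> (rhs_term i y) T dts_init)"
  proof -
  have K1: "1 \<in> {1..K}" using k_range by auto
  have y1: "y < 1" using thresholds(3) \<mu>_range[OF K1] by linarith
  have g0: "good N dts_init" by (simp add: good_def dts_init_def)
  show ?thesis
    by (intro sum_mono main_i[OF k_range _ y1 W_nonneg W_rows \<eta>_pos g0]) auto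
qed

end
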